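(* Let $X$ be a compact metric space, $T:X\to X$ continuous, and $\Phi=\{\phi_n\}$ a supadditive potential on $X$. Fix a positive integer $k$. Then for every subset $Z\subseteq X$, \[ P_Z(T,\Phi)\ge P_Z\big(T,\tfrac1k\phi_k\big). \]
   Context: $B_n(x,\epsilon)=\{y:d(T^ix,T^iy)<\epsilon,\ 0\le i\le n-1\}$. Supadditive potential: continuous $\phi_n$ with $\phi_{n+m}(x)\ge\phi_n(x)+\phi_m(T^nx)$. For $Z\subseteq X$, $\epsilon>0$, a cover of $Z$ is a countable family $\Gamma=\{B_{n_i}(x_i,\epsilon)\}$ covering $Z$, $n(\Gamma)=\min n_i$. $P_Z(T,\Phi)$: $M(Z,\Phi,s,N,\epsilon)=\inf_\Gamma\sum_i\exp(-sn_i+\phi_{n_i}(x_i))$ over covers with $n(\Gamma)\ge N$; $m(Z,\Phi,s,\epsilon)=\lim_NM$; $P_Z(T,\Phi,\epsilon)=\inf\{s:m(Z,\Phi,s,\epsilon)=0\}$; $P_Z(T,\Phi)=\liminf_{\epsilon\to0}P_Z(T,\Phi,\epsilon)$. For a continuous function $\psi$, $P_Z(T,\psi)$ is defined with the sequence $g_n=\sum_{i=0}^{n-1}\psi\circ T^i$ and supremum over balls: $M(Z,\psi,s,N,\epsilon)=\inf_\Gamma\sum_i\exp(-sn_i+\sup_{y\in B_{n_i}(x_i,\epsilon)}g_{n_i}(y))$ over covers with $n(\Gamma)\ge N$, $m(Z,\psi,s,\epsilon)=\lim_NM$, $P_Z(T,\psi,\epsilon)=\inf\{s:m(Z,\psi,s,\epsilon)=0\}$,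 $P_Z(T,\psi)=\liminf_{\epsilon\to0}P_Z(T,\psi,\epsilon)$. *)

theory Defs
  imports "HOL-Analysis.Analysis"
begin

definition bowen_ball :: "'a::metric_space set \<Rightarrow> ('a \<Rightarrow> 'a) \<Rightarrow> nat \<Rightarrow> 'a \<Rightarrow> real \<Rightarrow> 'a set" where
  "bowen_ball X T n x eps = {y \<in> X. \<forall>i<n. dist ((T ^^ i) x) ((T ^^ i) y) < eps}"

definition supadditive_potential :: "'a::metric_space set \<Rightarrow> ('a \<Rightarrow> 'a) \<Rightarrow> (nat \<Rightarrow> 'a \<Rightarrow> real) \<Rightarrow> bool" where
  "supadditive_potential X T \<phi> \<longleftrightarrow>
     (\<forall>n. continuous_on X (\<phi> n)) \<and>
     (\<forall>n m x. n \<ge> 1 \<longrightarrow> m \<ge> 1 \<longrightarrow> x \<in> X \<longrightarrow> \<phi> (n + m) x \<ge> \<phi> n x + \<phi> m ((T ^^ n) x))"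

definition bowen_covers :: "'a::metric_space set \<Rightarrow> ('a \<Rightarrow> 'a) \<Rightarrow> 'a set \<Rightarrow> nat \<Rightarrow> real \<Rightarrow> ('a \<times> nat) set set" where
  "bowen_covers X T Z N eps = {G. countable G \<and> G \<subseteq> X \<times> {N..} \<and>
      Z \<subseteq> (\<Union>(x, n)\<in>G. bowen_ball X T n x eps)}"

definition M_seq :: "'a::metric_space set \<Rightarrow> ('a \<Rightarrow> 'a) \<Rightarrow> (nat \<Rightarrow> 'a \<Rightarrow> real) \<Rightarrow> 'a set \<Rightarrow> real \<Rightarrow> nat \<Rightarrow> real \<Rightarrow> ennreal" where
  "M_seq X T \<phi> Z s N eps = (INF G\<in>bowen_covers X T Z N eps.
      infsum (\<lambda>(x, n). ennreal (exp (- s * real n + \<phi> n x))) G)"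

definition m_seq :: "'a::metric_space set \<Rightarrow> ('a \<Rightarrow> 'a) \<Rightarrow> (nat \<Rightarrow> 'a \<Rightarrow> real) \<Rightarrow> 'a set \<Rightarrow> real \<Rightarrow> real \<Rightarrow> ennreal" where
  "m_seq X T \<phi> Z s eps = lim (\<lambda>N. M_seq X T \<phi> Z s N eps)"

definition pressure_seq_eps :: "'a::metric_space set \<Rightarrow> ('a \<Rightarrow> 'a) \<Rightarrow> (nat \<Rightarrow> 'a \<Rightarrow> real) \<Rightarrow> 'a set \<Rightarrow> real \<Rightarrow> ereal" where
  "pressure_seq_eps X T \<phi> Z eps = Inf (ereal ` {s. m_seq X T \<phi> Z s eps = 0})"

definition pressure_seq :: "'a::metric_space set \<Rightarrow> ('a \<Rightarrow> 'a) \<Rightarrow> (nat \<Rightarrow> 'a \<Rightarrow> real) \<Rightarrow> 'a set \<Rightarrow> ereal" where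
  "pressure_seq X T \<phi> Z = Liminf (at_right 0) (\<lambda>eps. pressure_seq_eps X T \<phi> Z eps)"

definition birkhoff_sum :: "('a \<Rightarrow> 'a) \<Rightarrow> ('a \<Rightarrow> real) \<Rightarrow> nat \<Rightarrow> 'a \<Rightarrow> real" where
  "birkhoff_sum T \<psi> n y = (\<Sum>i<n. \<psi> ((T ^^ i) y))"

definition M_fun :: "'a::metric_space set \<Rightarrow> ('a \<Rightarrow> 'a) \<Rightarrow> ('a \<Rightarrow> real) \<Rightarrow> 'a set \<Rightarrow> real \<Rightarrow> nat \<Rightarrow> real \<Rightarrow> ennreal" where
  "M_fun X T \<psi> Z s N eps = (INF G\<in>bowen_covers X T Z N eps.
      infsum (\<lambda>(x, n). ennreal (exp (- s * real n +
         (SUP y\<in>bowen_ball X T n x eps. birkhoff_sum T \<psi> n y)))) G)"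

definition m_fun :: "'a::metric_space set \<Rightarrow> ('a \<Rightarrow> 'a) \<Rightarrow> ('a \<Rightarrow> real) \<Rightarrow> 'a set \<Rightarrow> real \<Rightarrow> real \<Rightarrow> ennreal" where
  "m_fun X T \<psi> Z s eps = lim (\<lambda>N. M_fun X T \<psi> Z s N eps)"

definition pressure_fun_eps :: "'a::metric_space set \<Rightarrow> ('a \<Rightarrow> 'a) \<Rightarrow> ('a \<Rightarrow> real) \<Rightarrow> 'a set \<Rightarrow> real \<Rightarrow> ereal" where
  "pressure_fun_eps X T \<psi> Z eps = Inf (ereal ` {s. m_fun X T \<psi> Z s eps = 0})"

definition pressure_fun :: "'a::metric_space set \<Rightarrow> ('a \<Rightarrow> 'a) \<Rightarrow> ('a \<Rightarrow> real) \<Rightarrow> 'a set \<Rightarrow> ereal" where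
  "pressure_fun X T \<psi> Z = Liminf (at_right 0) (\<lambda>eps. pressure_fun_eps X T \<psi> Z eps)"

end

theory Submission
  imports Defs
begin

lemma funpow_in: "x \<in> X \<Longrightarrow> T ` X \<subseteq> X \<Longrightarrow> (T ^^ i) x \<in> X"
  by (induction i) auto

lemma sum_split_mod:
  fixes f :: "nat \<Rightarrow> real" assumes k: "k > 0"
  shows "(\<Sum>i<m. f i) = (\<Sum>j<k. \<Sum>t\<in>{t. j + t*k < m}. f (j + t*k))"
proof -
  have fin: "\<And>j. finite {t. j + t*k < m}"
  proof -
    fix j have "{t. j + t*k < m} \<subseteq> {..<m}"
    proof
      fix t assume "t \<in> {t. j + t*k < m}"
      then have h: "j + t*k < m" by simp
      have "t \<le> t*k" using k by simp
      then have "t < m" using h by linarith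
      then show "t \<in> {..<m}" by simp
    qed
    then show "finite {t. j + t*k < m}" using finite_subset by blast
  qed
  have "(\<Sum>j<k. \<Sum>t\<in>{t. j + t*k < m}. f (j + t*k)) = (\<Sum>(j,t)\<in>(SIGMA j:{..<k}. {t. j + t*k < m}). f (j + t*k))"
    by (rule sum.Sigma) (auto simp: fin)
  also have "\<dots> = (\<Sum>i<m. f i)"
  proof -
    have bij: "bij_betw (\<lambda>(j,t). j + t*k) (SIGMA j:{..<k}. {t. j + t*k < m}) {..<m}"
    proof (rule bij_betw_byWitness[where f'="\<lambda>i. (i mod k, i div k)"])
      show "\<forall>a\<in>(SIGMA j:{..<k}. {t. j + t*k < m}). (\<lambda>i. (i mod k, i div k)) ((\<lambda>(j,t). j + t*k) a) = a"
        using k by auto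
      show "\<forall>a'\<in>{..<m}. (\<lambda>(j,t). j + t*k) (a' mod k, a' div k) = a'" by simp
      show "(\<lambda>(j,t). j + t*k) ` (SIGMA j:{..<k}. {t. j + t*k < m}) \<subseteq> {..<m}" by auto
      show "(\<lambda>i. (i mod k, i div k)) ` {..<m} \<subseteq> (SIGMA j:{..<k}. {t. j + t*k < m})"
        using k by auto
    qed
    have "(\<Sum>p\<in>(SIGMA j:{..<k}. {t. j + t*k < m}). f ((\<lambda>(j,t). j + t*k) p)) = (\<Sum>i<m. f i)"
      by (rule sum.reindex_bij_betw[OF bij])
    then show ?thesis by (simp add: case_prod_unfold)
  qed
  finally show ?thesis by simp
qed

lemma chain:
  assumes sp: "supadditive_potential X T \<phi>" and TX: "T ` X \<subseteq> X" and k: "k \<ge> 1"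
    and B: "\<And>m y. 1 \<le> m \<Longrightarrow> m \<le> k \<Longrightarrow> y \<in> X \<Longrightarrow> \<bar>\<phi> m y\<bar> \<le> B"
  shows "n \<ge> 1 \<Longrightarrow> x \<in> X \<Longrightarrow> \<phi> n x \<ge> (\<Sum>t\<in>{t. t*k + k < n}. \<phi> k ((T ^^ (t*k)) x)) - B"
proof (induction n arbitrary: x rule: less_induct)
  case (less n)
  show ?case
  proof (cases "n \<le> k")
    case True
    then have "{t. t*k + k < n} = {}" by auto
    moreover have "\<bar>\<phi> n x\<bar> \<le> B" using B[of n x] True less.prems by simp
    then have "\<phi> n x \<ge> - B" by linarith
    ultimately show ?thesis by simp
  next
    case False
    have xk: "(T ^^ k) x \<in> X" by (rule funpow_in[OF less.prems(2) TX])
    have IH: "\<phi> (n-k) ((T ^^ k) x) \<ge> (\<Sum>t\<in>{t. t*k + k < n-k}. \<phi> k ((T ^^ (t*k)) ((T ^^ k) x))) - B"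
      using less.IH[of "n-k" "(T ^^ k) x"] False k xk by simp
    have "\<phi> (k + (n-k)) x \<ge> \<phi> k x + \<phi> (n-k) ((T ^^ k) x)"
    proof -
      have "\<forall>n m x. n \<ge> 1 \<longrightarrow> m \<ge> 1 \<longrightarrow> x \<in> X \<longrightarrow> \<phi> (n + m) x \<ge> \<phi> n x + \<phi> m ((T ^^ n) x)"
        using sp unfolding supadditive_potential_def by blast
      moreover have "n - k \<ge> 1" using False by simp
      ultimately show ?thesis using k less.prems(2) by blast
    qed
    then have s1: "\<phi> n x \<ge> \<phi> k x + \<phi> (n-k) ((T ^^ k) x)" using False by simp
    have set: "{t. t*k + k < n} = insert 0 (Suc ` {t. t*k + k < n-k})"
    proof (rule set_eqI, rule iffI)
      fix t assume "t \<in> {t. t*k + k < n}"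
      then show "t \<in> insert 0 (Suc ` {t. t*k + k < n-k})"
        by (cases t) auto
    next
      fix t assume "t \<in> insert 0 (Suc ` {t. t*k + k < n-k})"
      then show "t \<in> {t. t*k + k < n}" using False by auto
    qed
    have fin: "finite {t. t*k + k < n-k}"
    proof (rule finite_subset[of _ "{..<n}"])
      show "{t. t*k + k < n-k} \<subseteq> {..<n}"
      proof
        fix t assume "t \<in> {t. t*k + k < n-k}"
        then have h: "t*k + k < n - k" by simp
        have "t \<le> t*k" using k by simp
        then have "t < n" using h by linarith
        then show "t \<in> {..<n}" by simp
      qed
    qed simp
    have e1: "(\<Sum>t\<in>{t. t*k + k < n}. \<phi> k ((T ^^ (t*k)) x)) =
        \<phi> k x + (\<Sum>t\<in>Suc ` {t. t*k + k < n-k}. \<phi> k ((T ^^ (t*k)) x))"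
      unfolding set by (subst sum.insert) (auto simp: fin)
    have e2: "(\<Sum>t\<in>Suc ` {t. t*k + k < n-k}. \<phi> k ((T ^^ (t*k)) x)) =
        (\<Sum>t\<in>{t. t*k + k < n-k}. \<phi> k ((T ^^ (t*k)) ((T ^^ k) x)))"
    proof -
      have fe: "\<And>t. (T ^^ (k + t * k)) x = (T ^^ (t*k)) ((T ^^ k) x)"
        by (metis funpow_add comp_apply add.commute)
      show ?thesis by (subst sum.reindex) (simp_all add: fe)
    qed
    show ?thesis using e1 e2 s1 IH by linarith
  qed
qed

lemma key:
  assumes sp: "supadditive_potential X T \<phi>" and TX: "T ` X \<subseteq> X" and k: "k \<ge> 1"
    and B: "\<And>m y. 1 \<le> m \<Longrightarrow> m \<le> k \<Longrightarrow> y \<in> X \<Longrightarrow> \<bar>\<phi> m y\<bar> \<le> B"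
    and x: "x \<in> X" and n: "n \<ge> k"
  shows "birkhoff_sum T (\<lambda>y. \<phi> k y / real k) n x \<le> \<phi> n x + 3*B"
proof -
  define f where "f i = \<phi> k ((T ^^ i) x)" for i
  have "\<bar>\<phi> k x\<bar> \<le> B" using B[of k x] k x by simp
  then have B0: "0 \<le> B" by linarith
  have sup: "\<forall>n m x. n \<ge> 1 \<longrightarrow> m \<ge> 1 \<longrightarrow> x \<in> X \<longrightarrow> \<phi> (n + m) x \<ge> \<phi> n x + \<phi> m ((T ^^ n) x)"
    using sp unfolding supadditive_potential_def by blast
  have per: "\<phi> n x \<ge> (\<Sum>t\<in>{t. j + t*k < n-k}. f (j + t*k)) - 2*B" if j: "j < k" for j
  proof (cases "j = 0")
    case True
    have st: "{t. t*k + k < n} = {t. j + t*k < n-k}" using True n by auto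
    have "\<phi> n x \<ge> (\<Sum>t\<in>{t. t*k + k < n}. \<phi> k ((T ^^ (t*k)) x)) - B"
      using chain[OF sp TX k B, of n x] n k x by simp
    then show ?thesis unfolding st f_def using True B0 by simp
  next
    case False
    have xj: "(T ^^ j) x \<in> X" by (rule funpow_in[OF x TX])
    have nj: "n - j \<ge> 1" using j n by simp
    have "\<phi> (j + (n-j)) x \<ge> \<phi> j x + \<phi> (n-j) ((T ^^ j) x)"
      using sup[rule_format, of j "n-j" x] nj False x by simp
    then have s1: "\<phi> n x \<ge> \<phi> j x + \<phi> (n-j) ((T ^^ j) x)" using j n by simp
    have "\<bar>\<phi> j x\<bar> \<le> B" using B[of j x] j False x by simp
    then have s2: "\<phi> j x \<ge> - B" by linarith
    have s3: "\<phi> (n-j) ((T ^^ j) x) \<ge> (\<Sum>t\<in>{t. t*k + k < n-j}. \<phi> k ((T ^^ (t*k)) ((T ^^ j) x))) - B"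
      using chain[OF sp TX k B, of "n-j" "(T ^^ j) x"] nj xj by simp
    have st: "{t. t*k + k < n-j} = {t. j + t*k < n-k}" using j n by auto
    have fe: "\<And>t. (T ^^ (t*k)) ((T ^^ j) x) = (T ^^ (j + t*k)) x"
      by (metis funpow_add comp_apply add.commute)
    have "(\<Sum>t\<in>{t. t*k + k < n-j}. \<phi> k ((T ^^ (t*k)) ((T ^^ j) x))) = (\<Sum>t\<in>{t. j + t*k < n-k}. f (j + t*k))"
      unfolding st f_def fe by simp
    then show ?thesis using s1 s2 s3 by linarith
  qed
  have "(\<Sum>j<k. \<phi> n x) \<ge> (\<Sum>j<k. (\<Sum>t\<in>{t. j + t*k < n-k}. f (j + t*k)) - 2*B)"
    by (rule sum_mono) (use per in simp)
  then have "real k * \<phi> n x \<ge> (\<Sum>j<k. \<Sum>t\<in>{t. j + t*k < n-k}. f (j + t*k)) - real k * (2*B)"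
    by (simp add: sum_subtractf)
  also have "(\<Sum>j<k. \<Sum>t\<in>{t. j + t*k < n-k}. f (j + t*k)) = (\<Sum>i<n-k. f i)"
    using sum_split_mod[of k f "n-k"] k by simp
  finally have A: "real k * \<phi> n x \<ge> (\<Sum>i<n-k. f i) - real k * (2*B)" .
  have split: "(\<Sum>i<n. f i) = (\<Sum>i<n-k. f i) + (\<Sum>i\<in>{n-k..<n}. f i)"
    using sum.atLeastLessThan_concat[of 0 "n-k" n f] by (simp add: atLeast0LessThan)
  have "(\<Sum>i\<in>{n-k..<n}. f i) \<le> real (card {n-k..<n}) * B"
    by (rule sum_bounded_above) (use B[of k] k x funpow_in[OF x TX] in \<open>auto simp: f_def abs_le_iff\<close>)
  then have C: "(\<Sum>i\<in>{n-k..<n}. f i) \<le> real k * B" using n by simp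
  have bs: "birkhoff_sum T (\<lambda>y. \<phi> k y / real k) n x = (\<Sum>i<n. f i) / real k"
    unfolding birkhoff_sum_def f_def by (simp add: sum_divide_distrib)
  have "(\<Sum>i<n. f i) \<le> real k * (\<phi> n x + 3*B)"
    using A C split by (simp add: algebra_simps)
  then show ?thesis unfolding bs using k by (simp add: pos_divide_le_eq mult.commute)
qed

lemma infsum_cmult_ennreal:
  fixes f :: "'b \<Rightarrow> ennreal"
  assumes c: "c < top"
  shows "infsum (\<lambda>x. c * f x) A = c * infsum f A"
proof -
  have "(f has_sum infsum f A) A" by (rule has_sum_infsum, rule nonneg_summable_on_complete) simp
  then have "((\<lambda>F. sum f F) \<longlongrightarrow> infsum f A) (finite_subsets_at_top A)"
    unfolding has_sum_def .
  then have "((\<lambda>F. c * sum f F) \<longlongrightarrow> c * infsum f A) (finite_subsets_at_top A)"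
    by (rule ennreal_tendsto_cmult[OF c])
  then have "((\<lambda>x. c * f x) has_sum (c * infsum f A)) A"
    unfolding has_sum_def by (simp add: sum_distrib_left)
  then show ?thesis by (rule infsumI)
qed

lemma M_seq_mono: "N \<le> N' \<Longrightarrow> M_seq X T \<phi> Z s N eps \<le> M_seq X T \<phi> Z s N' eps"
  unfolding M_seq_def
  by (rule INF_superset_mono) (auto simp: bowen_covers_def)

lemma m_seq_zero:
  assumes "m_seq X T \<phi> Z s eps = 0"
  shows "M_seq X T \<phi> Z s N eps = 0"
proof -
  have inc: "incseq (\<lambda>N. M_seq X T \<phi> Z s N eps)"
    by (rule incseq_SucI) (rule M_seq_mono, simp)
  then have "(\<lambda>N. M_seq X T \<phi> Z s N eps) \<longlonglongrightarrow> (SUP N. M_seq X T \<phi> Z s N eps)"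
    by (rule LIMSEQ_SUP)
  then have "m_seq X T \<phi> Z s eps = (SUP N. M_seq X T \<phi> Z s N eps)"
    unfolding m_seq_def by (rule limI)
  then have "(SUP N. M_seq X T \<phi> Z s N eps) = 0" using assms by simp
  then show ?thesis by (metis SUP_upper UNIV_I le_zero_eq)
qed

lemma ball_sup:
  assumes eps: "eps > 0" and x: "x \<in> X" and TX: "T ` X \<subseteq> X"
    and unif: "\<And>a b. a \<in> X \<Longrightarrow> b \<in> X \<Longrightarrow> dist a b < eps \<Longrightarrow> \<bar>\<psi> a - \<psi> b\<bar> \<le> \<delta>"
  shows "(SUP y\<in>bowen_ball X T n x eps. birkhoff_sum T \<psi> n y) \<le> birkhoff_sum T \<psi> n x + real n * \<delta>"
proof (rule cSUP_least)
  show "bowen_ball X T n x eps \<noteq> {}" using x eps unfolding bowen_ball_def by auto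
next
  fix y assume y: "y \<in> bowen_ball X T n x eps"
  then have yX: "y \<in> X" and d: "\<And>i. i < n \<Longrightarrow> dist ((T ^^ i) x) ((T ^^ i) y) < eps"
    unfolding bowen_ball_def by auto
  have "(\<Sum>i<n. \<psi> ((T ^^ i) y)) \<le> (\<Sum>i<n. \<psi> ((T ^^ i) x) + \<delta>)"
  proof (rule sum_mono)
    fix i assume "i \<in> {..<n}"
    then have "\<bar>\<psi> ((T ^^ i) y) - \<psi> ((T ^^ i) x)\<bar> \<le> \<delta>"
      using unif[OF funpow_in[OF yX TX] funpow_in[OF x TX]] d[of i] by (simp add: dist_commute)
    then show "\<psi> ((T ^^ i) y) \<le> \<psi> ((T ^^ i) x) + \<delta>" by linarith
  qed
  then show "birkhoff_sum T \<psi> n y \<le> birkhoff_sum T \<psi> n x + real n * \<delta>"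
    unfolding birkhoff_sum_def by (simp add: sum.distrib)
qed

lemma m_transfer:
  assumes sp: "supadditive_potential X T \<phi>" and TX: "T ` X \<subseteq> X" and k: "k \<ge> 1"
    and B: "\<And>m y. 1 \<le> m \<Longrightarrow> m \<le> k \<Longrightarrow> y \<in> X \<Longrightarrow> \<bar>\<phi> m y\<bar> \<le> B"
    and eps: "eps > 0"
    and unif: "\<And>a b. a \<in> X \<Longrightarrow> b \<in> X \<Longrightarrow> dist a b < eps \<Longrightarrow> \<bar>\<phi> k a / real k - \<phi> k b / real k\<bar> \<le> \<delta>"
    and m0: "m_seq X T \<phi> Z s eps = 0"
  shows "m_fun X T (\<lambda>y. \<phi> k y / real k) Z (s + \<delta>) eps = 0"
proof -
  define \<psi> where "\<psi> = (\<lambda>y. \<phi> k y / real k)"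
  define c where "c = ennreal (exp (3*B))"
  have ctop: "c < top" unfolding c_def by simp
  have Mz: "M_fun X T \<psi> Z (s + \<delta>) N eps = 0" if hN: "N \<ge> k" for N
  proof -
    let ?C = "bowen_covers X T Z N eps"
    let ?g = "\<lambda>G. infsum (\<lambda>(x, n). ennreal (exp (- s * real n + \<phi> n x))) G"
    have M0: "(INF G\<in>?C. ?g G) = 0" using m_seq_zero[OF m0, of N] unfolding M_seq_def .
    have Cne: "?C \<noteq> {}" using M0 by auto
    have le: "infsum (\<lambda>(x, n). ennreal (exp (- (s+\<delta>) * real n +
         (SUP y\<in>bowen_ball X T n x eps. birkhoff_sum T \<psi> n y)))) G \<le> c * ?g G"
      if G: "G \<in> ?C" for G
    proof -
      have "infsum (\<lambda>(x, n). ennreal (exp (- (s+\<delta>) * real n +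
         (SUP y\<in>bowen_ball X T n x eps. birkhoff_sum T \<psi> n y)))) G \<le>
         infsum (\<lambda>p. c * (\<lambda>(x, n). ennreal (exp (- s * real n + \<phi> n x))) p) G"
      proof (rule infsum_mono)
        fix p assume p: "p \<in> G"
        obtain x n where pxn: "p = (x, n)" by (cases p)
        have x: "x \<in> X" and nN: "n \<ge> N" using G p pxn unfolding bowen_covers_def by auto
        have s1: "(SUP y\<in>bowen_ball X T n x eps. birkhoff_sum T \<psi> n y) \<le> birkhoff_sum T \<psi> n x + real n * \<delta>"
          by (rule ball_sup[OF eps x TX]) (use unif in \<open>simp add: \<psi>_def\<close>)
        have s2: "birkhoff_sum T \<psi> n x \<le> \<phi> n x + 3*B"
        proof -
          have kn: "k \<le> n" using hN nN by linarith
          show ?thesis unfolding \<psi>_def by (rule key[OF sp TX k B x kn])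
        qed
        have "- (s+\<delta>) * real n + (SUP y\<in>bowen_ball X T n x eps. birkhoff_sum T \<psi> n y) \<le> 3*B + (- s * real n + \<phi> n x)"
          using s1 s2 by (simp add: algebra_simps)
        then have "exp (- (s+\<delta>) * real n + (SUP y\<in>bowen_ball X T n x eps. birkhoff_sum T \<psi> n y)) \<le> exp (3*B) * exp (- s * real n + \<phi> n x)"
          by (simp add: exp_add[symmetric])
        then have "ennreal (exp (- (s+\<delta>) * real n + (SUP y\<in>bowen_ball X T n x eps. birkhoff_sum T \<psi> n y))) \<le> c * ennreal (exp (- s * real n + \<phi> n x))"
          unfolding c_def by (simp add: ennreal_mult[symmetric] ennreal_leI)
        then show "(\<lambda>(x, n). ennreal (exp (- (s+\<delta>) * real n +
         (SUP y\<in>bowen_ball X T n x eps. birkhoff_sum T \<psi> n y)))) p \<le>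
          c * (\<lambda>(x, n). ennreal (exp (- s * real n + \<phi> n x))) p"
          unfolding pxn by simp
      qed (rule nonneg_summable_on_complete, simp)+
      also have "\<dots> = c * ?g G" by (rule infsum_cmult_ennreal[OF ctop])
      finally show ?thesis .
    qed
    have "M_fun X T \<psi> Z (s + \<delta>) N eps \<le> (INF G\<in>?C. c * ?g G)"
      unfolding M_fun_def by (rule INF_mono) (use le in auto)
    also have "(INF G\<in>?C. c * ?g G) = c * (INF G\<in>?C. ?g G)"
    proof -
      have "(\<lambda>x. c * x) (Inf (?g ` ?C)) = Inf ((\<lambda>x. c * x) ` (?g ` ?C))"
      proof (rule continuous_at_Inf_mono)
        show "mono (\<lambda>x. c * x)" by (rule monoI) (simp add: mult_left_mono)
        show "continuous (at_right (Inf (?g ` ?C))) (\<lambda>x. c * x)"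
        proof -
          have co: "continuous_on UNIV (\<lambda>x::ennreal. c * x)"
            using ennreal_continuous_on_cmult[OF ctop continuous_on_id] .
          then have "isCont (\<lambda>x. c*x) (Inf (?g ` ?C))"
            by (simp add: continuous_on_eq_continuous_at)
          then show ?thesis by (rule continuous_at_imp_continuous_within)
        qed
        show "?g ` ?C \<noteq> {}" using Cne by simp
      qed simp
      then show ?thesis by (simp add: image_image)
    qed
    also have "\<dots> = 0" using M0 by simp
    finally show ?thesis by simp
  qed
  have "eventually (\<lambda>N. M_fun X T \<psi> Z (s + \<delta>) N eps = 0) sequentially"
    using Mz eventually_at_top_linorder by blast
  then have "(\<lambda>N. M_fun X T \<psi> Z (s + \<delta>) N eps) \<longlonglongrightarrow> 0"
    by (rule tendsto_eventually)
  then show ?thesis unfolding m_fun_def \<psi>_def[symmetric] by (rule limI)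
qed

lemma ereal_aux1: "(a::ereal) \<le> ereal (s+d) \<Longrightarrow> a - ereal d \<le> ereal s"
  by (cases a) auto

lemma ereal_aux2: "(a::ereal) - ereal d \<le> b \<Longrightarrow> a \<le> b + ereal d"
  by (cases a; cases b) auto

theorem lemma4p1:
  fixes X :: "'a::metric_space set" and T :: "'a \<Rightarrow> 'a"
    and \<phi> :: "nat \<Rightarrow> 'a \<Rightarrow> real" and k :: nat and Z :: "'a set"
  assumes "compact X"
    and "continuous_on X T" and "T ` X \<subseteq> X"
    and "supadditive_potential X T \<phi>"
    and "k \<ge> 1"
    and "Z \<subseteq> X"
  shows "pressure_seq X T \<phi> Z \<ge> pressure_fun X T (\<lambda>x. \<phi> k x / real k) Z"
proof -
  note cX = assms(1) and TX = assms(3) and sp = assms(4) and k = assms(5)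
  have cont: "\<And>m. continuous_on X (\<phi> m)" using sp unfolding supadditive_potential_def by blast
  have "bounded (\<Union>m\<in>{1..k}. \<phi> m ` X)"
    by (rule bounded_UN) (auto intro!: compact_imp_bounded compact_continuous_image cont cX)
  then obtain B where B0: "\<forall>v\<in>(\<Union>m\<in>{1..k}. \<phi> m ` X). \<bar>v\<bar> \<le> B"
    unfolding bounded_real by blast
  have B: "\<And>m y. 1 \<le> m \<Longrightarrow> m \<le> k \<Longrightarrow> y \<in> X \<Longrightarrow> \<bar>\<phi> m y\<bar> \<le> B"
    using B0 by auto
  define \<psi> where "\<psi> = (\<lambda>y. \<phi> k y / real k)"
  have "continuous_on X \<psi>" unfolding \<psi>_def using k by (intro continuous_intros cont) auto
  then have uc: "uniformly_continuous_on X \<psi>" using cX compact_uniformly_continuous by blast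
  show ?thesis
  proof (rule ereal_le_epsilon2)
    fix \<delta> :: real assume d: "0 < \<delta>"
    obtain d0 where d0: "d0 > 0" and d0p: "\<And>a b. a \<in> X \<Longrightarrow> b \<in> X \<Longrightarrow> dist b a < d0 \<Longrightarrow> dist (\<psi> b) (\<psi> a) < \<delta>"
      using uc d unfolding uniformly_continuous_on_def by metis
    have ev: "\<forall>\<^sub>F eps in at_right 0. pressure_fun_eps X T (\<lambda>x. \<phi> k x / real k) Z eps \<le> pressure_seq_eps X T \<phi> Z eps + ereal \<delta>"
      unfolding eventually_at_right_field
    proof (intro exI conjI allI impI)
      show "(0::real) < d0" by (rule d0)
      fix eps :: real assume e0: "0 < eps" and e1: "eps < d0"
      have unif: "\<And>a b. a \<in> X \<Longrightarrow> b \<in> X \<Longrightarrow> dist a b < eps \<Longrightarrow> \<bar>\<phi> k a / real k - \<phi> k b / real k\<bar> \<le> \<delta>"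
      proof -
        fix a b assume a: "a \<in> X" and b: "b \<in> X" and ab: "dist a b < eps"
        have "dist (\<psi> a) (\<psi> b) < \<delta>" using d0p[OF b a] ab e1 by simp
        then show "\<bar>\<phi> k a / real k - \<phi> k b / real k\<bar> \<le> \<delta>" unfolding \<psi>_def dist_real_def by simp
      qed
      let ?A = "{s. m_seq X T \<phi> Z s eps = 0}"
      let ?pf = "pressure_fun_eps X T (\<lambda>x. \<phi> k x / real k) Z eps"
      have "?pf - ereal \<delta> \<le> Inf (ereal ` ?A)"
      proof (rule Inf_greatest)
        fix y assume "y \<in> ereal ` ?A"
        then obtain s where y: "y = ereal s" and sA: "s \<in> ?A" by (rule imageE)
        from sA have s: "m_seq X T \<phi> Z s eps = 0" by (rule CollectD)
        have "m_fun X T (\<lambda>y. \<phi> k y / real k) Z (s + \<delta>) eps = 0"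
          by (rule m_transfer[OF sp TX k B e0 unif s])
        then have "ereal (s + \<delta>) \<in> ereal ` {s. m_fun X T (\<lambda>y. \<phi> k y / real k) Z s eps = 0}"
          by blast
        then have "?pf \<le> ereal (s + \<delta>)" unfolding pressure_fun_eps_def by (rule Inf_lower)
        then show "?pf - ereal \<delta> \<le> y" unfolding y by (rule ereal_aux1)
      qed
      then show "?pf \<le> pressure_seq_eps X T \<phi> Z eps + ereal \<delta>" unfolding pressure_seq_eps_def
        by (rule ereal_aux2)
    qed
    have "pressure_fun X T (\<lambda>x. \<phi> k x / real k) Z \<le> Liminf (at_right 0) (\<lambda>eps. pressure_seq_eps X T \<phi> Z eps + ereal \<delta>)"
      unfolding pressure_fun_def by (rule Liminf_mono[OF ev])
    also have "\<dots> = pressure_seq X T \<phi> Z + ereal \<delta>"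
      unfolding pressure_seq_def by (rule Liminf_add_ereal_right) auto
    finally show "pressure_fun X T (\<lambda>x. \<phi> k x / real k) Z \<le> pressure_seq X T \<phi> Z + ereal \<delta>" .
  qed
qed

end
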